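(* Let $\beta>0$, $\tilde\lambda\in(0,1]$, $\mathcal{L}\ge0$, $x\ge0$, $z\ge0$, and portfolio weights $w^D,w^E\ge0$ with $w^D+w^E=1$, and set $y=-w^E\mathcal{L}$. For $\Delta>y$ let $p^D(\Delta)=x/(\Delta-y)$. If $$\Big(\tilde \lambda(x+z) - \beta\mathcal{L} w^D \Big)^2 < 4\beta \tilde\lambda \mathcal{L}xw^E,$$ then there is no $\Delta>y$ satisfying $\beta(\mathcal{L}+\Delta)\le\tilde\lambda\big(z+\Delta p^D(\Delta)\big)$.
   Context: Single period $t$ of a stablecoin market model. The stablecoin holder holds all $\mathcal{L}=\mathcal{L}_{t-1}$ outstanding stablecoins and Ether $\bar n_{t-1}$, and chooses weights $w^D$ (stablecoin) and $w^E=1-w^D$ (Ether); $x=w^D\bar n_{t-1}p^E_t$ is the new dollar stablecoin demand and $y=w^D\mathcal{L}-\mathcal{L}=-w^E\mathcal{L}$. The speculator, owing $\mathcal{L}$ stablecoins and holding Ether worth $z$ dollars, changes supply by $\Delta$; for $\Delta>y$ the market clears at price $p^D(\Delta)=x/(\Delta-y)$. Its leverage constraint (with liquidation threshold $\beta$ and leverage bound $\tilde\lambda$; $\tilde\lambda=1$ is the protocol's liquidation constraint) is $\beta(\mathcal{L}+\Delta)\le\tilde\lambda(z+\Delta p^D(\Delta))$. *)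

theory Defs
  imports Complex_Main
begin

definition pD :: "real \<Rightarrow> real \<Rightarrow> real \<Rightarrow> real" where
  "pD x y \<Delta> = x / (\<Delta> - y)"

end

theory Submission
  imports Defs
begin

theorem proposition3p3:
  fixes \<beta> lam L x z wD wE y :: real
  assumes "\<beta> > 0" and "0 < lam" and "lam \<le> 1"
    and "L \<ge> 0" and "x \<ge> 0" and "z \<ge> 0"
    and "wD \<ge> 0" and "wE \<ge> 0" and "wD + wE = 1"
    and "y = - wE * L"
    and "(lam * (x + z) - \<beta> * L * wD)^2 < 4 * \<beta> * lam * L * x * wE"
  shows "\<not> (\<exists>\<Delta>. \<Delta> > y \<and> \<beta> * (L + \<Delta>) \<le> lam * (z + \<Delta> * pD x y \<Delta>))"
proof
  assume "\<exists>\<Delta>. \<Delta> > y \<and> \<beta> * (L + \<Delta>) \<le> lam * (z + \<Delta> * pD x y \<Delta>)"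
  then obtain d where d: "d > y" and c: "\<beta> * (L + d) \<le> lam * (z + d * (x / (d - y)))"
    unfolding pD_def by blast
  define u where "u = d - y"
  have wD: "wD = 1 - wE" using assms(9) by simp
  have u: "u > 0" using d u_def by simp
  have dd: "d = u - wE * L" using u_def assms(10) by simp
  have "\<beta> * (L + d) * u \<le> lam * (z + d * (x / u)) * u"
    using c u u_def by (simp add: mult_right_mono)
  also have "\<dots> = lam * z * u + lam * d * x" using u by (simp add: field_simps)
  finally have q: "\<beta> * u^2 + (\<beta> * wD * L - lam * (x + z)) * u + lam * wE * L * x \<le> 0"
    unfolding dd wD by (simp add: algebra_simps power2_eq_square)
  have "4 * \<beta> * (\<beta> * u^2 + (\<beta> * wD * L - lam * (x + z)) * u + lam * wE * L * x)
      = (2 * \<beta> * u + (\<beta> * wD * L - lam * (x + z)))^2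
        + (4 * \<beta> * lam * L * x * wE - (lam * (x + z) - \<beta> * L * wD)^2)"
    by (simp add: algebra_simps power2_eq_square)
  also have "\<dots> > 0" using assms(11)
    by (smt (verit) zero_le_power2)
  finally have "4 * \<beta> * (\<beta> * u^2 + (\<beta> * wD * L - lam * (x + z)) * u + lam * wE * L * x) > 0" .
  moreover have "4 * \<beta> * (\<beta> * u^2 + (\<beta> * wD * L - lam * (x + z)) * u + lam * wE * L * x) \<le> 0"
    using q assms(1) by (simp add: mult_nonneg_nonpos)
  ultimately show False by simp
qed

end
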